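(* Under the setting and assumptions in the context, let $N_{AL}=\Pr(R=1,Y=0\mid Z=1)-\Pr(R=1,Y=0\mid Z=0)$ and suppose $N_{AL}\ge 0$ and $\max_{z}\Pr(R=1,Y=0\mid Z=z)>0$. Then $$\frac{N_{AL}}{1-\max_z\Pr(Y=1\mid Z=z)}\ \le\ APCE_{AL}\ \le\ \frac{N_{AL}}{\max_z\Pr(R=1,Y=0\mid Z=z)},$$ where maxima are over $z\in\{0,1\}$.
   Context: Units are drawn from a population (a probability space). Each unit has a binary assignment $Z\in\{0,1\}$ with $0<\Pr(Z=1)<1$, binary potential recommendations $R(0),R(1)\in\{0,1\}$, and binary potential outcomes $Y(0),Y(1)\in\{0,1\}$ indexed by the recommendation only (exclusion restriction). Observed quantities are $R=R(Z)$ and $Y=Y(R(Z))$. Assumptions: (Randomization) $Z$ is independent of $(R(0),R(1),Y(0),Y(1))$; (Monotonicity) $Y(1)\ge Y(0)$ almost surely. Always Low stratum $AL=\{Y(0)=Y(1)=0\}$; $APCE_{AL}=E[R(1)-R(0)\mid AL]$. *)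

theory Defs
  imports "HOL-Probability.Probability"
begin

definition cond_expect_event :: "'a measure \<Rightarrow> ('a \<Rightarrow> real) \<Rightarrow> ('a \<Rightarrow> bool) \<Rightarrow> real" where
  "cond_expect_event M X P =
     (\<integral>\<omega>. X \<omega> * indicator {\<omega> \<in> space M. P \<omega>} \<omega> \<partial>M) / \<P>(\<omega> in M. P \<omega>)"

end

theory Submission
  imports Defs
begin


lemma cond_helper:
  fixes M :: "'a measure" and Z :: "'a \<Rightarrow> bool" and T :: "'a \<Rightarrow> bool \<times> bool \<times> bool \<times> bool"
  assumes ps: "prob_space M"
    and randomization: "\<forall>(A :: bool set) (B :: (bool \<times> bool \<times> bool \<times> bool) set).
          \<P>(\<omega> in M. Z \<omega> \<in> A \<and> T \<omega> \<in> B)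
          = \<P>(\<omega> in M. Z \<omega> \<in> A) * \<P>(\<omega> in M. T \<omega> \<in> B)"
    and pos: "\<P>(\<omega> in M. Z \<omega> = z) > 0"
    and eq: "\<And>\<omega>. Z \<omega> = z \<Longrightarrow> (g \<omega> \<longleftrightarrow> f (T \<omega>))"
  shows "\<P>(\<omega> in M. g \<omega> \<bar> Z \<omega> = z) = \<P>(\<omega> in M. f (T \<omega>))"
proof -
  have 1: "{\<omega> \<in> space M. g \<omega> \<and> Z \<omega> = z} = {\<omega> \<in> space M. Z \<omega> \<in> {z} \<and> T \<omega> \<in> Collect f}"
    using eq by auto
  have 2: "{\<omega> \<in> space M. Z \<omega> = z} = {\<omega> \<in> space M. Z \<omega> \<in> {z}}" by auto
  have 3: "{\<omega> \<in> space M. f (T \<omega>)} = {\<omega> \<in> space M. T \<omega> \<in> Collect f}" by auto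
  show ?thesis
    unfolding cond_prob_def 1 using randomization[rule_format, of "{z}" "Collect f"] pos
    unfolding 2 3 by simp
qed

theorem mainTheorem8:
  fixes M :: "'a measure"
    and Z R0 R1 Y0 Y1 :: "'a \<Rightarrow> bool"
  assumes "prob_space M"
    and rv: "Z \<in> M \<rightarrow>\<^sub>M count_space UNIV"
      "R0 \<in> M \<rightarrow>\<^sub>M count_space UNIV" "R1 \<in> M \<rightarrow>\<^sub>M count_space UNIV"
      "Y0 \<in> M \<rightarrow>\<^sub>M count_space UNIV" "Y1 \<in> M \<rightarrow>\<^sub>M count_space UNIV"
    and pZ: "0 < \<P>(\<omega> in M. Z \<omega>)" "\<P>(\<omega> in M. Z \<omega>) < 1"
    and randomization: "\<forall>(A :: bool set) (B :: (bool \<times> bool \<times> bool \<times> bool) set).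
          \<P>(\<omega> in M. Z \<omega> \<in> A \<and> (R0 \<omega>, R1 \<omega>, Y0 \<omega>, Y1 \<omega>) \<in> B)
          = \<P>(\<omega> in M. Z \<omega> \<in> A) * \<P>(\<omega> in M. (R0 \<omega>, R1 \<omega>, Y0 \<omega>, Y1 \<omega>) \<in> B)"
    and monotonicity: "AE \<omega> in M. Y0 \<omega> \<le> Y1 \<omega>"
    and N_nonneg:
      "\<P>(\<omega> in M. (if Z \<omega> then R1 \<omega> else R0 \<omega>) \<and>
              \<not> (if (if Z \<omega> then R1 \<omega> else R0 \<omega>) then Y1 \<omega> else Y0 \<omega>) \<bar> Z \<omega>)
       - \<P>(\<omega> in M. (if Z \<omega> then R1 \<omega> else R0 \<omega>) \<and>
              \<not> (if (if Z \<omega> then R1 \<omega> else R0 \<omega>) then Y1 \<omega> else Y0 \<omega>) \<bar> \<not> Z \<omega>) \<ge> 0"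
    and max_pos:
      "max (\<P>(\<omega> in M. (if Z \<omega> then R1 \<omega> else R0 \<omega>) \<and>
              \<not> (if (if Z \<omega> then R1 \<omega> else R0 \<omega>) then Y1 \<omega> else Y0 \<omega>) \<bar> Z \<omega>))
           (\<P>(\<omega> in M. (if Z \<omega> then R1 \<omega> else R0 \<omega>) \<and>
              \<not> (if (if Z \<omega> then R1 \<omega> else R0 \<omega>) then Y1 \<omega> else Y0 \<omega>) \<bar> \<not> Z \<omega>)) > 0"
  shows
    "let R = (\<lambda>\<omega>. if Z \<omega> then R1 \<omega> else R0 \<omega>);
         Y = (\<lambda>\<omega>. if R \<omega> then Y1 \<omega> else Y0 \<omega>);
         pRY0 = (\<lambda>z. \<P>(\<omega> in M. R \<omega> \<and> \<not> Y \<omega> \<bar> Z \<omega> = z));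
         pY1 = (\<lambda>z. \<P>(\<omega> in M. Y \<omega> \<bar> Z \<omega> = z));
         N_AL = pRY0 True - pRY0 False;
         APCE_AL = cond_expect_event M (\<lambda>\<omega>. of_bool (R1 \<omega>) - of_bool (R0 \<omega>))
                     (\<lambda>\<omega>. \<not> Y0 \<omega> \<and> \<not> Y1 \<omega>)
     in N_AL / (1 - max (pY1 True) (pY1 False)) \<le> APCE_AL
        \<and> APCE_AL \<le> N_AL / max (pRY0 True) (pRY0 False)"
proof -
  interpret prob_space M by fact
  note pr[measurable] = rv
  define T where "T = (\<lambda>\<omega>. (R0 \<omega>, R1 \<omega>, Y0 \<omega>, Y1 \<omega>))"
  have rnd: "\<forall>(A :: bool set) (B :: (bool \<times> bool \<times> bool \<times> bool) set).
          \<P>(\<omega> in M. Z \<omega> \<in> A \<and> T \<omega> \<in> B)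
          = \<P>(\<omega> in M. Z \<omega> \<in> A) * \<P>(\<omega> in M. T \<omega> \<in> B)"
    using randomization unfolding T_def .
  have pT: "\<P>(\<omega> in M. Z \<omega> = True) > 0" using pZ by simp
  have cF: "{\<omega> \<in> space M. Z \<omega> = False} = space M - {\<omega> \<in> space M. Z \<omega>}" by auto
  have pF: "\<P>(\<omega> in M. Z \<omega> = False) > 0" unfolding cF
    using pZ prob_compl[of "{\<omega> \<in> space M. Z \<omega>}"] by simp
  define a where "a = \<P>(\<omega> in M. \<not> Y0 \<omega> \<and> \<not> Y1 \<omega>)"
  define x1 where "x1 = \<P>(\<omega> in M. R1 \<omega> \<and> \<not> Y0 \<omega> \<and> \<not> Y1 \<omega>)"
  define x0 where "x0 = \<P>(\<omega> in M. R0 \<omega> \<and> \<not> Y0 \<omega> \<and> \<not> Y1 \<omega>)"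
  have e1: "\<P>(\<omega> in M. R1 \<omega> \<and> \<not> Y1 \<omega>) = x1" unfolding x1_def
    by (rule prob_eq_AE) (use monotonicity in auto)
  have e0: "\<P>(\<omega> in M. R0 \<omega> \<and> \<not> Y1 \<omega>) = x0" unfolding x0_def
    by (rule prob_eq_AE) (use monotonicity in auto)
  let ?R = "\<lambda>\<omega>. if Z \<omega> then R1 \<omega> else R0 \<omega>"
  let ?Y = "\<lambda>\<omega>. if ?R \<omega> then Y1 \<omega> else Y0 \<omega>"
  have c1: "\<P>(\<omega> in M. ?R \<omega> \<and> \<not> ?Y \<omega> \<bar> Z \<omega> = True) = x1"
    using cond_helper[OF \<open>prob_space M\<close> rnd pT, of "\<lambda>\<omega>. ?R \<omega> \<and> \<not> ?Y \<omega>" "\<lambda>(a,b,c,d). b \<and> \<not> d"] e1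
    by (simp add: T_def)
  have c0: "\<P>(\<omega> in M. ?R \<omega> \<and> \<not> ?Y \<omega> \<bar> Z \<omega> = False) = x0"
    using cond_helper[OF \<open>prob_space M\<close> rnd pF, of "\<lambda>\<omega>. ?R \<omega> \<and> \<not> ?Y \<omega>" "\<lambda>(a,b,c,d). a \<and> \<not> d"] e0
    by (simp add: T_def)
  have d1: "\<P>(\<omega> in M. ?Y \<omega> \<bar> Z \<omega> = True) = \<P>(\<omega> in M. if R1 \<omega> then Y1 \<omega> else Y0 \<omega>)"
    using cond_helper[OF \<open>prob_space M\<close> rnd pT, of "?Y" "\<lambda>(a,b,c,d). if b then d else c"]
    by (simp add: T_def)
  have d0: "\<P>(\<omega> in M. ?Y \<omega> \<bar> Z \<omega> = False) = \<P>(\<omega> in M. if R0 \<omega> then Y1 \<omega> else Y0 \<omega>)"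
    using cond_helper[OF \<open>prob_space M\<close> rnd pF, of "?Y" "\<lambda>(a,b,c,d). if a then d else c"]
    by (simp add: T_def)
  have cA: "space M - {\<omega> \<in> space M. \<not> Y0 \<omega> \<and> \<not> Y1 \<omega>} = {\<omega> \<in> space M. Y0 \<omega> \<or> Y1 \<omega>}" by auto
  have compA: "\<P>(\<omega> in M. Y0 \<omega> \<or> Y1 \<omega>) = 1 - a"
    unfolding a_def cA[symmetric] by (rule prob_compl) measurable
  have b1: "\<P>(\<omega> in M. if R1 \<omega> then Y1 \<omega> else Y0 \<omega>) \<le> 1 - a"
    unfolding compA[symmetric] by (rule finite_measure_mono) auto
  have b0: "\<P>(\<omega> in M. if R0 \<omega> then Y1 \<omega> else Y0 \<omega>) \<le> 1 - a"
    unfolding compA[symmetric] by (rule finite_measure_mono) auto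
  have x1a: "x1 \<le> a" unfolding x1_def a_def by (rule finite_measure_mono) auto
  have x0a: "x0 \<le> a" unfolding x0_def a_def by (rule finite_measure_mono) auto
  have mp: "max x1 x0 > 0" using max_pos c1 c0 by simp
  have apos: "a > 0" using mp x1a x0a by linarith
  have Nn: "x1 - x0 \<ge> 0" using N_nonneg c1 c0 by simp
  have int: "(\<integral>\<omega>. (of_bool (R1 \<omega>) - of_bool (R0 \<omega>) :: real) * indicator {\<omega> \<in> space M. \<not> Y0 \<omega> \<and> \<not> Y1 \<omega>} \<omega> \<partial>M)
      = x1 - x0"
  proof -
    have "(\<integral>\<omega>. (of_bool (R1 \<omega>) - of_bool (R0 \<omega>) :: real) * indicator {\<omega> \<in> space M. \<not> Y0 \<omega> \<and> \<not> Y1 \<omega>} \<omega> \<partial>M)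
      = (\<integral>\<omega>. (indicator {\<omega> \<in> space M. R1 \<omega> \<and> \<not> Y0 \<omega> \<and> \<not> Y1 \<omega>} \<omega> :: real) - indicator {\<omega> \<in> space M. R0 \<omega> \<and> \<not> Y0 \<omega> \<and> \<not> Y1 \<omega>} \<omega> \<partial>M)"
      by (rule Bochner_Integration.integral_cong) (auto simp: indicator_def)
    also have "\<dots> = x1 - x0" unfolding x1_def x0_def
      by (subst Bochner_Integration.integral_diff) (auto intro!: integrable_real_indicator simp: less_top[symmetric])
    finally show ?thesis .
  qed
  have apce: "cond_expect_event M (\<lambda>\<omega>. of_bool (R1 \<omega>) - of_bool (R0 \<omega>)) (\<lambda>\<omega>. \<not> Y0 \<omega> \<and> \<not> Y1 \<omega>) = (x1 - x0) / a"
    unfolding cond_expect_event_def int a_def ..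
  have m1: "1 - max (\<P>(\<omega> in M. if R1 \<omega> then Y1 \<omega> else Y0 \<omega>)) (\<P>(\<omega> in M. if R0 \<omega> then Y1 \<omega> else Y0 \<omega>)) \<ge> a"
    using b1 b0 by simp
  have L: "(x1 - x0) / (1 - max (\<P>(\<omega> in M. if R1 \<omega> then Y1 \<omega> else Y0 \<omega>)) (\<P>(\<omega> in M. if R0 \<omega> then Y1 \<omega> else Y0 \<omega>))) \<le> (x1 - x0) / a"
    apply (rule divide_left_mono[OF m1 Nn])
    apply (rule mult_pos_pos)
    using m1 apos by linarith+
  have U: "(x1 - x0) / a \<le> (x1 - x0) / max x1 x0"
    by (rule divide_left_mono) (use mp x1a x0a Nn in auto)
  show ?thesis
    unfolding Let_def apce using c1 c0 d1 d0 L U by simp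
qed

end
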